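(* Let $G=(V,E)$ be a finite undirected graph that is triangle-full and 4-clique-free. For $v\in V$ let $N[v]=\{v\}\cup\{v'\in V:\{v,v'\}\in E\}$, let $L_v=(V^*vv)^\omega\cup(V^*(V\setminus N[v]))^\omega\subseteq V^\omega$, and $L_G=\bigcap_{v\in V}L_v$. If there exists a (possibly non-deterministic) complete generalised Büchi automaton over the input alphabet $V$ with three states recognising $L_G$, then $G$ is 3-colourable.
   Context: A finite undirected graph is $G=(V,E)$ with $V$ finite and $E$ a set of 2-element subsets of $V$. A $k$-clique is a set of $k$ pairwise adjacent vertices; $G$ is triangle-full if every vertex lies in a 3-clique, and 4-clique-free if it has no 4-clique. A 3-colouring is a map $c:V\to\{1,2,3\}$ with $c(v)\ne c(v')$ whenever $\{v,v'\}\in E$. For sets $X,Y$ of letters, $(X^*Y)^\omega$ denotes infinite concatenations of words from $X^*Y$. An automaton is a tuple $(Q,\Sigma,q_{\mathrm{init}},\Delta,\Gamma,\mathrm{col},W)$ with finite state set, finite input alphabet $\Sigma$, initial state, transitions $\Delta\subseteq Q\times\Sigma\times Q$, output alphabet $\Gamma$, labelling $\mathrm{col}:\Delta\to\Gamma$, acceptance condition $W\subseteq\Gamma^\omega$. A run on $w=a_1a_2\cdots$ is a sequence $(q_0,a_1,q_1)(q_1,a_2,q_2)\cdots$ of transitions with $q_0=q_{\mathrm{init}}$, accepting if its label sequence is in $W$; the recognised language is the set of words with an accepting run. A generalised Büchi automaton with finite output colour set $C$ has $\Gamma=2^C$ and $W=\{x : \text{every } c\in C \text{ occurs in infinitely many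 letters of } x\}$. Complete: for every $(p,a)\in Q\times\Sigma$ there is at least one $q$ with $(p,a,q)\in\Delta$. *)

theory Defs
  imports Main
begin

definition finite_graph :: "'v set \<Rightarrow> 'v set set \<Rightarrow> bool" where
  "finite_graph V E \<longleftrightarrow> finite V \<and> (\<forall>e\<in>E. e \<subseteq> V \<and> card e = 2)"

definition is_clique :: "'v set set \<Rightarrow> 'v set \<Rightarrow> bool" where
  "is_clique E K \<longleftrightarrow> (\<forall>u\<in>K. \<forall>v\<in>K. u \<noteq> v \<longrightarrow> {u, v} \<in> E)"

definition is_k_clique :: "'v set \<Rightarrow> 'v set set \<Rightarrow> nat \<Rightarrow> 'v set \<Rightarrow> bool" where
  "is_k_clique V E k K \<longleftrightarrow> K \<subseteq> V \<and> card K = k \<and> is_clique E K"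

definition triangle_full :: "'v set \<Rightarrow> 'v set set \<Rightarrow> bool" where
  "triangle_full V E \<longleftrightarrow> (\<forall>v\<in>V. \<exists>K. is_k_clique V E 3 K \<and> v \<in> K)"

definition four_clique_free :: "'v set \<Rightarrow> 'v set set \<Rightarrow> bool" where
  "four_clique_free V E \<longleftrightarrow> \<not> (\<exists>K. is_k_clique V E 4 K)"

definition three_colourable :: "'v set \<Rightarrow> 'v set set \<Rightarrow> bool" where
  "three_colourable V E \<longleftrightarrow>
     (\<exists>c :: 'v \<Rightarrow> nat. (\<forall>v\<in>V. c v \<in> {1, 2, 3}) \<and>
        (\<forall>v\<in>V. \<forall>v'\<in>V. {v, v'} \<in> E \<longrightarrow> c v \<noteq> c v'))"

definition closed_nbhd :: "'v set \<Rightarrow> 'v set set \<Rightarrow> 'v \<Rightarrow> 'v set" where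
  "closed_nbhd V E v = {v} \<union> {v' \<in> V. {v, v'} \<in> E}"

text \<open>Infinite words are functions nat => letter. The omega-power of a set K of
  finite words is the set of infinite concatenations u0 u1 u2 ... of words from K.\<close>

definition omega_power :: "'a list set \<Rightarrow> (nat \<Rightarrow> 'a) set" where
  "omega_power K = {w. \<exists>p :: nat \<Rightarrow> nat. p 0 = 0 \<and> strict_mono p \<and>
                          (\<forall>n. map w [p n..<p (Suc n)] \<in> K)}"

definition star_concat :: "'a set \<Rightarrow> 'a list set \<Rightarrow> 'a list set" where
  "star_concat X Y = {u @ y | u y. set u \<subseteq> X \<and> y \<in> Y}"

definition lang_v :: "'v set \<Rightarrow> 'v set set \<Rightarrow> 'v \<Rightarrow> (nat \<Rightarrow> 'v) set" where
  "lang_v V E v =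
     omega_power (star_concat V {[v, v]}) \<union>
     omega_power (star_concat V {[a] | a. a \<in> V - closed_nbhd V E v})"

text \<open>L_G as a subset of V^omega (for V empty the empty intersection is V^omega, which is empty).\<close>
definition lang_G :: "'v set \<Rightarrow> 'v set set \<Rightarrow> (nat \<Rightarrow> 'v) set" where
  "lang_G V E = {w. range w \<subseteq> V \<and> (\<forall>v\<in>V. w \<in> lang_v V E v)}"

definition is_gba :: "'q set \<Rightarrow> 'a set \<Rightarrow> 'q \<Rightarrow> ('q \<times> 'a \<times> 'q) set \<Rightarrow>
                      ('q \<times> 'a \<times> 'q \<Rightarrow> 'c set) \<Rightarrow> 'c set \<Rightarrow> bool" where
  "is_gba Q \<Sigma> qi \<Delta> col C \<longleftrightarrow> finite Q \<and> finite \<Sigma> \<and> qi \<in> Q \<and> \<Delta> \<subseteq> Q \<times> \<Sigma> \<times> Q \<and>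
      finite C \<and> (\<forall>t\<in>\<Delta>. col t \<subseteq> C)"

definition gba_complete :: "'q set \<Rightarrow> 'a set \<Rightarrow> ('q \<times> 'a \<times> 'q) set \<Rightarrow> bool" where
  "gba_complete Q \<Sigma> \<Delta> \<longleftrightarrow> (\<forall>p\<in>Q. \<forall>a\<in>\<Sigma>. \<exists>q. (p, a, q) \<in> \<Delta>)"

definition is_run :: "'q \<Rightarrow> ('q \<times> 'a \<times> 'q) set \<Rightarrow> (nat \<Rightarrow> 'a) \<Rightarrow> (nat \<Rightarrow> 'q) \<Rightarrow> bool" where
  "is_run qi \<Delta> w r \<longleftrightarrow> r 0 = qi \<and> (\<forall>i. (r i, w i, r (Suc i)) \<in> \<Delta>)"

definition gb_accepting :: "('q \<times> 'a \<times> 'q \<Rightarrow> 'c set) \<Rightarrow> 'c set \<Rightarrow> (nat \<Rightarrow> 'a) \<Rightarrow> (nat \<Rightarrow> 'q) \<Rightarrow> bool" where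
  "gb_accepting col C w r \<longleftrightarrow> (\<forall>c\<in>C. infinite {i. c \<in> col (r i, w i, r (Suc i))})"

definition gba_lang :: "'a set \<Rightarrow> 'q \<Rightarrow> ('q \<times> 'a \<times> 'q) set \<Rightarrow>
                        ('q \<times> 'a \<times> 'q \<Rightarrow> 'c set) \<Rightarrow> 'c set \<Rightarrow> (nat \<Rightarrow> 'a) set" where
  "gba_lang \<Sigma> qi \<Delta> col C =
     {w. range w \<subseteq> \<Sigma> \<and> (\<exists>r. is_run qi \<Delta> w r \<and> gb_accepting col C w r)}"

end

theory Submission
  imports Defs "HOL-Library.Infinite_Set"
begin


fun tpath :: "('q \<times> 'a \<times> 'q) set \<Rightarrow> 'q \<Rightarrow> ('q \<times> 'a \<times> 'q) list \<Rightarrow> 'q \<Rightarrow> bool" where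
  "tpath D s [] s' = (s = s')"
| "tpath D s (t # ts) s' = (t \<in> D \<and> fst t = s \<and> tpath D (snd (snd t)) ts s')"

lemma tpath_append: "tpath D s (xs @ ys) s'' \<longleftrightarrow> (\<exists>s'. tpath D s xs s' \<and> tpath D s' ys s'')"
  by (induction xs arbitrary: s) auto

lemma tpath_nth_in: "tpath D s xs s' \<Longrightarrow> i < length xs \<Longrightarrow> xs ! i \<in> D"
  by (induction xs arbitrary: s i) (auto simp: nth_Cons split: nat.splits)

lemma tpath_nth_link: "tpath D s xs s' \<Longrightarrow> Suc i < length xs \<Longrightarrow> snd (snd (xs ! i)) = fst (xs ! Suc i)"
proof (induction xs arbitrary: s i)
  case Nil then show ?case by simp
next
  case (Cons t ts)
  then show ?case by (cases i) (auto, cases ts, auto)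
qed

lemma tpath_first: "tpath D s xs s' \<Longrightarrow> xs \<noteq> [] \<Longrightarrow> fst (xs ! 0) = s"
  by (cases xs) auto

lemma tpath_last: "tpath D s xs s' \<Longrightarrow> xs \<noteq> [] \<Longrightarrow> snd (snd (xs ! (length xs - 1))) = s'"
proof (induction xs arbitrary: s)
  case Nil then show ?case by simp
next
  case (Cons t ts)
  then show ?case by (cases ts) (auto simp: nth_Cons split: nat.splits)
qed

definition stepL :: "('q \<times> 'a \<times> 'q) set \<Rightarrow> 'a set \<Rightarrow> ('q \<times> 'q) set" where
  "stepL D L = {(u, v). \<exists>l\<in>L. (u, l, v) \<in> D}"

definition cw :: "('q \<times> 'a \<times> 'q) set \<Rightarrow> 'a set \<Rightarrow> 'q \<Rightarrow> bool" where
  "cw D L s \<longleftrightarrow> (s, s) \<in> (stepL D L)\<^sup>+"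

lemma stepL_mono: "L \<subseteq> L' \<Longrightarrow> stepL D L \<subseteq> stepL D L'"
  unfolding stepL_def by auto

lemma cw_mono: "cw D L s \<Longrightarrow> L \<subseteq> L' \<Longrightarrow> cw D L' s"
  unfolding cw_def using trancl_mono[OF _ stepL_mono] by blast

lemma stepL_insert: "stepL D (insert l L) = stepL D {l} \<union> stepL D L"
  unfolding stepL_def by auto

lemma tpath_rtrancl: "tpath D u xs v \<Longrightarrow> (\<forall>t\<in>set xs. fst (snd t) \<in> L) \<Longrightarrow> (u, v) \<in> (stepL D L)\<^sup>*"
proof (induction xs arbitrary: u)
  case Nil then show ?case by simp
next
  case (Cons t ts)
  then have "(u, snd (snd t)) \<in> stepL D L" unfolding stepL_def by (cases t) auto
  moreover have "(snd (snd t), v) \<in> (stepL D L)\<^sup>*" using Cons by simp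
  ultimately show ?case using Cons.prems(1) by (cases t) (auto intro: converse_rtrancl_into_rtrancl)
qed

lemma tpath_on: "tpath D u xs v \<Longrightarrow> (\<forall>t\<in>set xs. fst (snd t) \<in> L) \<Longrightarrow> t \<in> set xs \<Longrightarrow>
   (u, fst t) \<in> (stepL D L)\<^sup>* \<and> (fst t, v) \<in> (stepL D L)\<^sup>+"
proof (induction xs arbitrary: u)
  case Nil then show ?case by simp
next
  case (Cons y ys)
  then have st: "(u, snd (snd y)) \<in> stepL D L" and yD: "fst y = u" unfolding stepL_def by (cases y; auto)+
  have rest: "tpath D (snd (snd y)) ys v" using Cons by simp
  show ?case
  proof (cases "t = y")
    case True
    have "(snd (snd y), v) \<in> (stepL D L)\<^sup>*" using tpath_rtrancl[OF rest] Cons.prems(2) by simp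
    then have "(u, v) \<in> (stepL D L)\<^sup>+" by (rule rtrancl_into_trancl2[OF st])
    then show ?thesis using True yD by simp
  next
    case False
    then have "t \<in> set ys" using Cons by simp
    from Cons.IH[OF rest _ this] Cons.prems(2) have "(snd (snd y), fst t) \<in> (stepL D L)\<^sup>* \<and> (fst t, v) \<in> (stepL D L)\<^sup>+" by simp
    then show ?thesis using st converse_rtrancl_into_rtrancl[OF st] by blast
  qed
qed

lemma cw_on_cycle: "tpath D q xs q \<Longrightarrow> (\<forall>t\<in>set xs. fst (snd t) \<in> L) \<Longrightarrow> t \<in> set xs \<Longrightarrow> cw D L (fst t)"
proof -
  assume a: "tpath D q xs q" "\<forall>t\<in>set xs. fst (snd t) \<in> L" "t \<in> set xs"
  from tpath_on[OF a] have "(q, fst t) \<in> (stepL D L)\<^sup>*" "(fst t, q) \<in> (stepL D L)\<^sup>+" by auto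
  then show ?thesis unfolding cw_def by (meson trancl_rtrancl_trancl)
qed

lemma trancl_tpath: "(u, v) \<in> (stepL D L)\<^sup>+ \<Longrightarrow> \<exists>xs. xs \<noteq> [] \<and> tpath D u xs v \<and> (\<forall>t\<in>set xs. fst (snd t) \<in> L)"
proof (induction rule: trancl_induct)
  case (base y)
  then obtain l where "l \<in> L" "(u, l, y) \<in> D" unfolding stepL_def by auto
  then show ?case by (intro exI[of _ "[(u, l, y)]"]) auto
next
  case (step y z)
  then obtain xs where xs: "xs \<noteq> []" "tpath D u xs y" "\<forall>t\<in>set xs. fst (snd t) \<in> L" by auto
  from step obtain l where "l \<in> L" "(y, l, z) \<in> D" unfolding stepL_def by auto
  then show ?case using xs by (intro exI[of _ "xs @ [(y, l, z)]"]) (auto simp: tpath_append)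
qed



lemma cyc2: "(u, v) \<in> R \<Longrightarrow> (v, u) \<in> R \<Longrightarrow> (u, u) \<in> R\<^sup>+"
  by (meson r_into_trancl' trancl_into_trancl)

lemma cyc3: "(u, v) \<in> R \<Longrightarrow> (v, w) \<in> R \<Longrightarrow> (w, u) \<in> R \<Longrightarrow> (u, u) \<in> R\<^sup>+"
  by (meson r_into_trancl' trancl_into_trancl)

lemma trap_reach:
  assumes "\<And>v. (q, v) \<in> R \<Longrightarrow> v = s" "\<And>v. (s, v) \<in> R \<Longrightarrow> v = s" "(q, v) \<in> R\<^sup>+"
  shows "v = s"
  using assms(3)
proof (induction rule: trancl_induct)
  case (base y) then show ?case using assms(1) by blast
next
  case (step y z) then show ?case using assms(2) by blast
qed

lemma FL_caseX:
  fixes X A B :: "('q \<times> 'q) set"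
  assumes sub: "X \<union> A \<union> B \<subseteq> {q,s,t} \<times> {q,s,t}"
    and dist: "q \<noteq> s" "q \<noteq> t" "s \<noteq> t"
    and cX: "\<forall>u\<in>{q,s,t}. \<exists>v. (u, v) \<in> X"
    and cyc: "(q, q) \<in> (X \<union> A \<union> B)\<^sup>+"
    and nab: "(q, q) \<notin> (A \<union> B)\<^sup>+" and nxb: "(q, q) \<notin> (X \<union> B)\<^sup>+"
    and qs: "(q, s) \<in> B" and tq: "(t, q) \<in> X"
  shows "\<forall>u\<in>{q,s,t}. (u, u) \<in> (X \<union> A)\<^sup>+"
proof -
  have n1: "(q, q) \<notin> X" using nxb by blast
  have n2: "(q, q) \<notin> A" using nab by blast
  have n3: "(q, q) \<notin> B" using nab by blast
  have s1: "(s, q) \<notin> X" using nxb cyc2[of q s "X \<union> B"] qs by blast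
  have s2: "(s, q) \<notin> A" using nab cyc2[of q s "A \<union> B"] qs by blast
  have s3: "(s, q) \<notin> B" using nab cyc2[of q s "A \<union> B"] qs by blast
  have t1: "(q, t) \<notin> X" using nxb cyc2[of q t "X \<union> B"] tq by blast
  have t2: "(s, t) \<notin> X" using nxb cyc3[of q s "X \<union> B" t] tq qs by blast
  have t3: "(q, t) \<notin> B" using nxb cyc2[of q t "X \<union> B"] tq by blast
  have t4: "(s, t) \<notin> B" using nxb cyc3[of q s "X \<union> B" t] tq qs by blast
  obtain v where qv: "(q, v) \<in> X" using cX by blast
  then have "v \<in> {q,s,t}" using sub by blast
  then have qX: "(q, s) \<in> X" using qv n1 t1 by blast
  obtain v' where sv: "(s, v') \<in> X" using cX by blast
  then have "v' \<in> {q,s,t}" using sub by blast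
  then have sX: "(s, s) \<in> X" using sv s1 t2 by blast
  have ss: "(s, s) \<in> (X \<union> A)\<^sup>+" using sX by blast
  show ?thesis
  proof (cases "(q, t) \<in> A")
    case True
    then have "(q, q) \<in> (X \<union> A)\<^sup>+" "(t, t) \<in> (X \<union> A)\<^sup>+"
      using cyc2[of q t "X \<union> A"] cyc2[of t q "X \<union> A"] tq by blast+
    then show ?thesis using ss by blast
  next
    case qtA: False
    show ?thesis
    proof (cases "(s, t) \<in> A")
      case True
      then have "(q, q) \<in> (X \<union> A)\<^sup>+" "(t, t) \<in> (X \<union> A)\<^sup>+"
        using cyc3[of q s "X \<union> A" t] cyc3[of t q "X \<union> A" s] tq qX by blast+
      then show ?thesis using ss by blast
    next
      case stA: False
      have a1: "v = s" if "(q, v) \<in> X \<union> A \<union> B" for v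
      proof -
        have "v \<in> {q,s,t}" using that sub by blast
        then show ?thesis using that n1 n2 n3 t1 t3 qtA by blast
      qed
      have a2: "v = s" if "(s, v) \<in> X \<union> A \<union> B" for v
      proof -
        have "v \<in> {q,s,t}" using that sub by blast
        then show ?thesis using that s1 s2 s3 t2 t4 stA by blast
      qed
      have "q = s" using trap_reach[of q "X \<union> A \<union> B" s q, OF a1 a2 cyc] by blast
      then show ?thesis using dist by blast
    qed
  qed
qed

lemma FL_caseB:
  fixes X A B :: "('q \<times> 'q) set"
  assumes sub: "X \<union> A \<union> B \<subseteq> {q,s,t} \<times> {q,s,t}"
    and dist: "q \<noteq> s" "q \<noteq> t" "s \<noteq> t"
    and cyc: "(q, q) \<in> (X \<union> A \<union> B)\<^sup>+"
    and nab: "(q, q) \<notin> (A \<union> B)\<^sup>+" and nxb: "(q, q) \<notin> (X \<union> B)\<^sup>+"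
    and qs: "(q, s) \<in> B" and tq: "(t, q) \<in> B"
  shows False
proof -
  have n1: "(q, q) \<notin> X" using nxb by blast
  have n2: "(q, q) \<notin> A" using nab by blast
  have n3: "(q, q) \<notin> B" using nab by blast
  have s1: "(s, q) \<notin> X" using nxb cyc2[of q s "X \<union> B"] qs by blast
  have s2: "(s, q) \<notin> A" using nab cyc2[of q s "A \<union> B"] qs by blast
  have s3: "(s, q) \<notin> B" using nab cyc2[of q s "A \<union> B"] qs by blast
  have t1: "(q, t) \<notin> X" using nxb cyc2[of q t "X \<union> B"] tq by blast
  have t2: "(q, t) \<notin> A" using nab cyc2[of q t "A \<union> B"] tq by blast
  have t3: "(q, t) \<notin> B" using nab cyc2[of q t "A \<union> B"] tq by blast
  have t4: "(s, t) \<notin> X" using nxb cyc3[of q s "X \<union> B" t] tq qs by blast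
  have t5: "(s, t) \<notin> A" using nab cyc3[of q s "A \<union> B" t] tq qs by blast
  have t6: "(s, t) \<notin> B" using nab cyc3[of q s "A \<union> B" t] tq qs by blast
  have a1: "v = s" if "(q, v) \<in> X \<union> A \<union> B" for v
  proof -
    have "v \<in> {q,s,t}" using that sub by blast
    then show ?thesis using that n1 n2 n3 t1 t2 t3 by blast
  qed
  have a2: "v = s" if "(s, v) \<in> X \<union> A \<union> B" for v
  proof -
    have "v \<in> {q,s,t}" using that sub by blast
    then show ?thesis using that s1 s2 s3 t4 t5 t6 by blast
  qed
  have "q = s" using trap_reach[of q "X \<union> A \<union> B" s q, OF a1 a2 cyc] by blast
  then show False using dist by blast
qed

lemma FL_core:
  fixes X A B :: "('q \<times> 'q) set"
  assumes sub: "X \<union> A \<union> B \<subseteq> {q,s,t} \<times> {q,s,t}"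
    and dist: "q \<noteq> s" "q \<noteq> t" "s \<noteq> t"
    and cX: "\<forall>u\<in>{q,s,t}. \<exists>v. (u, v) \<in> X"
    and cA: "\<forall>u\<in>{q,s,t}. \<exists>v. (u, v) \<in> A"
    and cyc: "(q, q) \<in> (X \<union> A \<union> B)\<^sup>+"
    and nab: "(q, q) \<notin> (A \<union> B)\<^sup>+" and nxb: "(q, q) \<notin> (X \<union> B)\<^sup>+"
    and qs: "(q, s) \<in> B"
  shows "\<forall>u\<in>{q,s,t}. (u, u) \<in> (X \<union> A)\<^sup>+"
proof -
  have n1: "(q, q) \<notin> X" using nxb by blast
  have n2: "(q, q) \<notin> A" using nab by blast
  have n3: "(q, q) \<notin> B" using nab by blast
  have s1: "(s, q) \<notin> X" using nxb cyc2[of q s "X \<union> B"] qs by blast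
  have s2: "(s, q) \<notin> A" using nab cyc2[of q s "A \<union> B"] qs by blast
  have s3: "(s, q) \<notin> B" using nab cyc2[of q s "A \<union> B"] qs by blast
  obtain u where u: "(u, q) \<in> X \<union> A \<union> B" using cyc by (meson tranclD2)
  then have "u \<in> {q,s,t}" using sub by blast
  then have "u = t" using u n1 n2 n3 s1 s2 s3 by blast
  with u have tq: "(t, q) \<in> X \<union> A \<union> B" by simp
  show ?thesis
  proof (cases "(t, q) \<in> B")
    case True
    then show ?thesis using FL_caseB[OF sub dist cyc nab nxb qs] by blast
  next
    case False
    show ?thesis
    proof (cases "(t, q) \<in> X")
      case True
      then show ?thesis using FL_caseX[OF sub dist cX cyc nab nxb qs] by blast
    next
      case False
      with tq \<open>(t, q) \<notin> B\<close> have tqA: "(t, q) \<in> A" by blast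
      have sub': "A \<union> X \<union> B \<subseteq> {q,s,t} \<times> {q,s,t}" using sub by blast
      have cyc': "(q, q) \<in> (A \<union> X \<union> B)\<^sup>+" using cyc by (simp add: Un_commute Un_left_commute)
      have "\<forall>u\<in>{q,s,t}. (u, u) \<in> (A \<union> X)\<^sup>+"
        using FL_caseX[OF sub' dist cA cyc' nxb nab qs tqA] .
      then show ?thesis by (simp add: Un_commute)
    qed
  qed
qed

lemma FL_rel:
  fixes X A B :: "('q \<times> 'q) set"
  assumes sub: "X \<union> A \<union> B \<subseteq> {q,s,t} \<times> {q,s,t}"
    and dist: "q \<noteq> s" "q \<noteq> t" "s \<noteq> t"
    and cX: "\<forall>u\<in>{q,s,t}. \<exists>v. (u, v) \<in> X"
    and cA: "\<forall>u\<in>{q,s,t}. \<exists>v. (u, v) \<in> A"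
    and cB: "\<forall>u\<in>{q,s,t}. \<exists>v. (u, v) \<in> B"
    and cyc: "(q, q) \<in> (X \<union> A \<union> B)\<^sup>+"
    and nab: "(q, q) \<notin> (A \<union> B)\<^sup>+" and nxb: "(q, q) \<notin> (X \<union> B)\<^sup>+"
  shows "\<forall>u\<in>{q,s,t}. (u, u) \<in> (X \<union> A)\<^sup>+"
proof -
  obtain y where y: "(q, y) \<in> B" using cB by blast
  then have "y \<in> {q,s,t}" using sub by blast
  moreover have "y \<noteq> q" using y nab by blast
  ultimately have "y = s \<or> y = t" by blast
  then show ?thesis
  proof
    assume "y = s"
    then show ?thesis using FL_core[OF sub dist cX cA cyc nab nxb] y by blast
  next
    assume "y = t"
    have e: "{q,t,s} = {q,s,t}" by blast
    have d: "q \<noteq> t" "q \<noteq> s" "t \<noteq> s" using dist by auto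
    have "\<forall>u\<in>{q,t,s}. (u, u) \<in> (X \<union> A)\<^sup>+"
      using FL_core[of X A B q t s] sub d cX cA cyc nab nxb y \<open>y = t\<close> unfolding e by blast
    then show ?thesis unfolding e .
  qed
qed

lemma exists_cycle:
  assumes fin: "finite Q" and ne: "Q \<noteq> {}" and sub: "R \<subseteq> Q \<times> Q" and tot: "\<forall>u\<in>Q. \<exists>v. (u, v) \<in> R"
  shows "\<exists>u\<in>Q. (u, u) \<in> R\<^sup>+"
proof (rule ccontr)
  assume na: "\<not> ?thesis"
  have "acyclic R" unfolding acyclic_def
  proof
    fix x show "(x, x) \<notin> R\<^sup>+"
    proof
      assume "(x, x) \<in> R\<^sup>+"
      then have "x \<in> Q" using sub by (meson mem_Sigma_iff subsetD tranclD)
      then show False using na \<open>(x, x) \<in> R\<^sup>+\<close> by blast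
    qed
  qed
  moreover have "finite R" using sub fin by (meson finite_SigmaI finite_subset)
  ultimately have "wf (R\<inverse>)" by (simp add: finite_acyclic_wf_converse)
  moreover obtain x where "x \<in> Q" using ne by blast
  ultimately obtain z where z: "z \<in> Q" "\<And>y. (y, z) \<in> R\<inverse> \<Longrightarrow> y \<notin> Q" by (meson wfE_min)
  obtain v where "(z, v) \<in> R" using tot z(1) by blast
  then show False using z sub by blast
qed



definition cseq :: "'t list \<Rightarrow> 't list \<Rightarrow> nat \<Rightarrow> 't" where
  "cseq pre cyc n = (if n < length pre then pre ! n else cyc ! ((n - length pre) mod length cyc))"

lemma cseq_in:
  assumes "tpath D qi pre q0" "tpath D q0 cyc q0" "cyc \<noteq> []"
  shows "cseq pre cyc n \<in> D"
proof (cases "n < length pre")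
  case True then show ?thesis using assms(1) tpath_nth_in unfolding cseq_def by fastforce
next
  case False
  have "(n - length pre) mod length cyc < length cyc" using assms(3) by simp
  then show ?thesis using False assms(2) tpath_nth_in unfolding cseq_def by fastforce
qed

lemma cseq_first:
  assumes "tpath D qi pre q0" "tpath D q0 cyc q0" "cyc \<noteq> []"
  shows "fst (cseq pre cyc 0) = qi"
proof (cases pre)
  case Nil
  then have "qi = q0" using assms(1) by simp
  then show ?thesis using Nil assms(2,3) tpath_first unfolding cseq_def by fastforce
next
  case (Cons a list)
  then show ?thesis using assms(1) unfolding cseq_def by simp
qed

lemma cseq_link:
  assumes p: "tpath D qi pre q0" and c: "tpath D q0 cyc q0" and ne: "cyc \<noteq> []"
  shows "snd (snd (cseq pre cyc n)) = fst (cseq pre cyc (Suc n))"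
proof -
  define m where "m = length pre"
  define L where "L = length cyc"
  have L0: "0 < L" using ne L_def by simp
  consider "Suc n < m" | "Suc n = m" | "m \<le> n" by linarith
  then show ?thesis
  proof cases
    case 1
    then show ?thesis using tpath_nth_link[OF p, of n] unfolding cseq_def m_def by simp
  next
    case 2
    then have pne: "pre \<noteq> []" using m_def by auto
    have "snd (snd (pre ! (length pre - 1))) = q0" using tpath_last[OF p pne] .
    moreover have "fst (cyc ! 0) = q0" using tpath_first[OF c ne] .
    moreover have "n = length pre - 1" using 2 m_def by simp
    ultimately show ?thesis using 2 unfolding cseq_def m_def by auto
  next
    case 3
    define k where "k = (n - m) mod L"
    have kL: "k < L" using L0 k_def by simp
    have e1: "cseq pre cyc n = cyc ! k" using 3 unfolding cseq_def k_def m_def L_def by simp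
    have "Suc n - m = Suc (n - m)" using 3 by simp
    then have e2: "cseq pre cyc (Suc n) = cyc ! (if Suc k = L then 0 else Suc k)"
      using 3 unfolding cseq_def k_def m_def L_def by (simp add: mod_Suc)
    show ?thesis
    proof (cases "Suc k = L")
      case True
      then have "k = length cyc - 1" using L_def by simp
      then show ?thesis using e1 e2 True tpath_last[OF c ne] tpath_first[OF c ne] by simp
    next
      case False
      then have "Suc k < length cyc" using kL L_def by simp
      then show ?thesis using e1 e2 False tpath_nth_link[OF c] by simp
    qed
  qed
qed

lemma F1:
  assumes Dsub: "D \<subseteq> Q \<times> V \<times> Q"
    and p: "tpath D qi pre q0" and c: "tpath D q0 cyc q0" and ne: "cyc \<noteq> []"
    and cols: "\<forall>x\<in>C. \<exists>t\<in>set cyc. x \<in> col t"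
  shows "(\<lambda>n. fst (snd (cseq pre cyc n))) \<in> gba_lang V qi D col C"
proof -
  define w where "w = (\<lambda>n. fst (snd (cseq pre cyc n)))"
  define r where "r = (\<lambda>n. fst (cseq pre cyc n))"
  have tr: "(r n, w n, r (Suc n)) = cseq pre cyc n" for n
    unfolding r_def w_def using cseq_link[OF p c ne, of n] by (metis prod.collapse)
  have inD: "cseq pre cyc n \<in> D" for n using cseq_in[OF p c ne] .
  have rng: "range w \<subseteq> V"
  proof
    fix y assume "y \<in> range w"
    then obtain n where n: "y = w n" by blast
    have "cseq pre cyc n \<in> Q \<times> V \<times> Q" using inD[of n] Dsub by blast
    then show "y \<in> V" unfolding n w_def by (cases "cseq pre cyc n") auto
  qed
  have run: "is_run qi D w r" unfolding is_run_def
    using cseq_first[OF p c ne] tr inD unfolding r_def by simp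
  have acc: "gb_accepting col C w r" unfolding gb_accepting_def
  proof
    fix x assume "x \<in> C"
    then obtain t where t: "t \<in> set cyc" "x \<in> col t" using cols by blast
    then obtain k where k: "k < length cyc" "cyc ! k = t" by (meson in_set_conv_nth)
    show "infinite {i. x \<in> col (r i, w i, r (Suc i))}"
      unfolding infinite_nat_iff_unbounded_le
    proof
      fix N
      define n where "n = length pre + k + N * length cyc"
      have "N \<le> N * length cyc" using ne by (cases "length cyc") auto
      then have "N \<le> n" unfolding n_def by linarith
      moreover have "cseq pre cyc n = t"
        unfolding cseq_def n_def using k by simp
      ultimately show "\<exists>n\<ge>N. n \<in> {i. x \<in> col (r i, w i, r (Suc i))}" using tr t by auto
    qed
  qed
  show ?thesis unfolding gba_lang_def using rng run acc unfolding w_def by blast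
qed

lemma tpath_upt:
  assumes "\<forall>k. (r k, w k, r (Suc k)) \<in> D" "a \<le> b"
  shows "tpath D (r a) (map (\<lambda>k. (r k, w k, r (Suc k))) [a..<b]) (r b)"
  using assms(2)
proof (induction b)
  case 0 then show ?case by simp
next
  case (Suc b)
  show ?case
  proof (cases "a \<le> b")
    case True
    then show ?thesis using Suc assms(1) by (simp add: tpath_append)
  next
    case False
    then have "a = Suc b" using Suc by simp
    then show ?thesis by simp
  qed
qed

lemma F2:
  assumes run: "is_run qi D w r" and acc: "gb_accepting col C w r"
    and finQ: "finite Q" and finC: "finite C" and Dsub: "D \<subseteq> Q \<times> V \<times> Q"
  shows "\<exists>pre cyc q0. tpath D qi pre q0 \<and> tpath D q0 cyc q0 \<and> cyc \<noteq> [] \<and>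
           (\<forall>x\<in>C. \<exists>t\<in>set cyc. x \<in> col t) \<and> (\<forall>t\<in>set cyc. fst (snd t) \<in> range w)"
proof -
  define \<tau> where "\<tau> = (\<lambda>k. (r k, w k, r (Suc k)))"
  have tD: "\<forall>k. (r k, w k, r (Suc k)) \<in> D" using run unfolding is_run_def by blast
  have rQ: "r k \<in> Q" for k using tD Dsub by blast
  have "finite (r ` UNIV)" using rQ finQ by (meson finite_subset image_subsetI)
  then obtain q where q: "infinite (r -` {q})" using inf_img_fin_domE by blast
  then obtain i where i: "r i = q" using infinite_imp_nonempty[OF q] by blast
  define f where "f = (\<lambda>x. SOME k. i \<le> k \<and> x \<in> col (\<tau> k))"
  have fprop: "i \<le> f x \<and> x \<in> col (\<tau> (f x))" if "x \<in> C" for x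
  proof -
    have "infinite {k. x \<in> col (r k, w k, r (Suc k))}" using acc that unfolding gb_accepting_def by blast
    then have "\<exists>k. i \<le> k \<and> x \<in> col (\<tau> k)" unfolding infinite_nat_iff_unbounded_le \<tau>_def by blast
    from someI_ex[OF this] show ?thesis unfolding f_def .
  qed
  define B where "B = Suc (Max (insert i (f ` C)))"
  obtain j where j: "j \<ge> B" "r j = q" using q unfolding infinite_nat_iff_unbounded_le by blast
  have fin: "finite (insert i (f ` C))" using finC by simp
  have ij: "i < j" using j Max_ge[OF fin, of i] unfolding B_def by simp
  have fj: "f x < j" if "x \<in> C" for x using j Max_ge[OF fin, of "f x"] that unfolding B_def by simp
  define pre where "pre = map \<tau> [0..<i]"
  define cyc where "cyc = map \<tau> [i..<j]"
  have p1: "tpath D qi pre (r i)" using tpath_upt[OF tD, of 0 i] run unfolding pre_def \<tau>_def is_run_def by simp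
  have p2: "tpath D (r i) cyc (r i)" using tpath_upt[OF tD, of i j] ij i j(2) unfolding cyc_def \<tau>_def by simp
  have ne: "cyc \<noteq> []" using ij unfolding cyc_def by simp
  have cols: "\<forall>x\<in>C. \<exists>t\<in>set cyc. x \<in> col t"
  proof
    fix x assume "x \<in> C"
    then have "f x \<in> {i..<j}" "x \<in> col (\<tau> (f x))" using fprop fj by auto
    then show "\<exists>t\<in>set cyc. x \<in> col t" unfolding cyc_def by auto
  qed
  have lets: "\<forall>t\<in>set cyc. fst (snd t) \<in> range w" unfolding cyc_def \<tau>_def by auto
  show ?thesis
    apply (rule exI[of _ pre], rule exI[of _ cyc], rule exI[of _ "r i"])
    using p1 p2 ne cols lets by simp
qed

lemma not_in_lang_v:
  assumes nb: "\<forall>n\<ge>m. w n \<in> closed_nbhd V E l" and nd: "\<forall>n\<ge>m. \<not> (w n = l \<and> w (Suc n) = l)"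
  shows "w \<notin> lang_v V E l"
proof
  assume "w \<in> lang_v V E l"
  then consider (A) "w \<in> omega_power (star_concat V {[l, l]})"
    | (B) "w \<in> omega_power (star_concat V {[a] |a. a \<in> V - closed_nbhd V E l})"
    unfolding lang_v_def by blast
  then show False
  proof cases
    case A
    then obtain p where p: "strict_mono p" "\<forall>n. map w [p n..<p (Suc n)] \<in> star_concat V {[l, l]}"
      unfolding omega_power_def by blast
    have "map w [p m..<p (Suc m)] \<in> star_concat V {[l, l]}" using p(2) by blast
    then obtain u y where uy: "map w [p m..<p (Suc m)] = u @ y" "y = [l, l]" unfolding star_concat_def by auto
    then have u: "map w [p m..<p (Suc m)] = u @ [l, l]" by simp
    have "length (map w [p m..<p (Suc m)]) = length u + 2" using u by simp
    then have len: "p (Suc m) - p m = length u + 2" by simp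
    have "w (p m + length u) = l" using nth_map_upt[of "length u" "p (Suc m)" "p m" w] u len by simp
    moreover have "w (p m + Suc (length u)) = l" using nth_map_upt[of "Suc (length u)" "p (Suc m)" "p m" w] u len by (simp add: nth_append)
    moreover have "m \<le> p m + length u" using strict_mono_imp_increasing[OF p(1), of m] by simp
    ultimately show False using nd by auto
  next
    case B
    then obtain p where p: "strict_mono p" "\<forall>n. map w [p n..<p (Suc n)] \<in> star_concat V {[a] |a. a \<in> V - closed_nbhd V E l}"
      unfolding omega_power_def by blast
    have "map w [p m..<p (Suc m)] \<in> star_concat V {[a] |a. a \<in> V - closed_nbhd V E l}" using p(2) by blast
    then obtain u y where u: "map w [p m..<p (Suc m)] = u @ [y]" "y \<in> V - closed_nbhd V E l" unfolding star_concat_def by auto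
    have "length (map w [p m..<p (Suc m)]) = length u + 1" using u by simp
    then have len: "p (Suc m) - p m = length u + 1" by simp
    have "w (p m + length u) = y" using nth_map_upt[of "length u" "p (Suc m)" "p m" w] u len by simp
    moreover have "m \<le> p m + length u" using strict_mono_imp_increasing[OF p(1), of m] by simp
    ultimately show False using nb u(2) by auto
  qed
qed



definition nbr :: "'v set \<Rightarrow> 'v set set \<Rightarrow> 'v \<Rightarrow> 'v set" where
  "nbr V E l = {v \<in> V. {l, v} \<in> E}"

fun nodbl :: "'a \<Rightarrow> 'a list \<Rightarrow> bool" where
  "nodbl l [] = True"
| "nodbl l [y] = True"
| "nodbl l (y # z # zs) = ((y \<noteq> l \<or> z \<noteq> l) \<and> nodbl l (z # zs))"

lemma nodbl_nth: "nodbl l xs \<Longrightarrow> Suc i < length xs \<Longrightarrow> xs ! i \<noteq> l \<or> xs ! Suc i \<noteq> l"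
proof (induction l xs arbitrary: i rule: nodbl.induct)
  case (3 l y z zs)
  then show ?case by (cases i) auto
qed auto

lemma nodbl_append:
  "nodbl l xs \<Longrightarrow> nodbl l ys \<Longrightarrow> (xs \<noteq> [] \<Longrightarrow> ys \<noteq> [] \<Longrightarrow> last xs \<noteq> l \<or> hd ys \<noteq> l) \<Longrightarrow> nodbl l (xs @ ys)"
proof (induction l xs rule: nodbl.induct)
  case (1 l) then show ?case by simp
next
  case (2 l y)
  then show ?case by (cases ys) auto
next
  case (3 l y z zs)
  then show ?case by auto
qed

lemma nodbl_nol: "\<forall>z\<in>set xs. z \<noteq> l \<Longrightarrow> nodbl l xs"
  by (induction l xs rule: nodbl.induct) auto

lemma concat_tpath:
  assumes "tpath D s xs s'" "\<forall>t\<in>set xs. tpath D (fst t) (\<omega> (fst t)) (fst t)"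
  shows "tpath D s (concat (map (\<lambda>t. \<omega> (fst t) @ [t]) xs)) s'"
  using assms
proof (induction xs arbitrary: s)
  case Nil then show ?case by simp
next
  case (Cons t ts)
  then have "fst t = s" by simp
  then show ?case using Cons by (auto simp: tpath_append)
qed

lemma concat_nodbl:
  assumes "\<forall>t\<in>set xs. \<omega> (fst t) \<noteq> [] \<and> (\<forall>u\<in>set (\<omega> (fst t)). f u \<noteq> l)"
  shows "nodbl l (map f (concat (map (\<lambda>t. \<omega> (fst t) @ [t]) xs))) \<and>
         (xs \<noteq> [] \<longrightarrow> hd (map f (concat (map (\<lambda>t. \<omega> (fst t) @ [t]) xs))) \<noteq> l)"
  using assms
proof (induction xs)
  case Nil then show ?case by simp
next
  case (Cons t ts)
  define A where "A = map f (\<omega> (fst t))"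
  define R where "R = map f (concat (map (\<lambda>t. \<omega> (fst t) @ [t]) ts))"
  have Ane: "A \<noteq> []" and Anol: "\<forall>z\<in>set A. z \<noteq> l" using Cons.prems unfolding A_def by auto
  have IH: "nodbl l R" "ts \<noteq> [] \<longrightarrow> hd R \<noteq> l" using Cons unfolding R_def by auto
  have Rne: "R \<noteq> [] \<Longrightarrow> ts \<noteq> []" unfolding R_def by auto
  have c1: "nodbl l (A @ [f t])"
    by (rule nodbl_append) (use Ane Anol nodbl_nol[OF Anol] in auto)
  have c2: "nodbl l ((A @ [f t]) @ R)"
    by (rule nodbl_append[OF c1 IH(1)]) (use IH(2) Rne in auto)
  have e: "map f (concat (map (\<lambda>t. \<omega> (fst t) @ [t]) (t # ts))) = (A @ [f t]) @ R"
    unfolding A_def R_def by simp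
  have "hd ((A @ [f t]) @ R) \<noteq> l" using Ane Anol by (cases A) auto
  then show ?case using c2 e by simp
qed

lemma cseq_nodbl:
  assumes ne: "cyc \<noteq> []" and nd: "nodbl l (map f cyc)" and h: "f (cyc ! 0) \<noteq> l" and n: "length pre \<le> n"
  shows "\<not> (f (cseq pre cyc n) = l \<and> f (cseq pre cyc (Suc n)) = l)"
proof -
  define m where "m = length pre"
  define L where "L = length cyc"
  have L0: "0 < L" using ne L_def by simp
  define k where "k = (n - m) mod L"
  have kL: "k < L" using L0 k_def by simp
  have e1: "cseq pre cyc n = cyc ! k" using n unfolding cseq_def k_def m_def L_def by simp
  have "Suc n - m = Suc (n - m)" using n m_def by simp
  then have e2: "cseq pre cyc (Suc n) = cyc ! (if Suc k = L then 0 else Suc k)"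
    using n unfolding cseq_def k_def m_def L_def by (simp add: mod_Suc)
  show ?thesis
  proof (cases "Suc k = L")
    case True then show ?thesis using e2 h by simp
  next
    case False
    then have sk: "Suc k < length (map f cyc)" using kL L_def by simp
    have "map f cyc ! k = f (cyc ! k)" "map f cyc ! Suc k = f (cyc ! Suc k)" using sk by auto
    with nodbl_nth[OF nd sk] show ?thesis using e1 e2 False by simp
  qed
qed

lemma cseq_set:
  assumes "cyc \<noteq> []" "length pre \<le> n" shows "cseq pre cyc n \<in> set cyc"
  using assms unfolding cseq_def by simp

lemma lemmaA:
  fixes D :: "('q \<times> 'v \<times> 'q) set" and V :: "'v set"
  assumes fg: "finite_graph V E"
    and Dsub: "D \<subseteq> Q \<times> V \<times> Q"
    and lang: "gba_lang V qi D col C = lang_G V E"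
    and lV: "l \<in> V"
    and p: "tpath D qi pre q0" and c: "tpath D q0 cyc q0" and ne: "cyc \<noteq> []"
    and cols: "\<forall>x\<in>C. \<exists>t\<in>set cyc. x \<in> col t"
    and lets: "\<forall>t\<in>set cyc. fst (snd t) \<in> closed_nbhd V E l"
  shows "\<exists>t\<in>set cyc. \<not> cw D (nbr V E l) (fst t)"
proof (rule ccontr)
  assume "\<not> ?thesis"
  then have allcw: "\<forall>t\<in>set cyc. cw D (nbr V E l) (fst t)" by blast
  define P where "P = (\<lambda>s xs. xs \<noteq> [] \<and> tpath D s xs s \<and> (\<forall>t\<in>set xs. fst (snd t) \<in> nbr V E l))"
  define \<omega> where "\<omega> = (\<lambda>s. SOME xs. P s xs)"
  have \<omega>P: "P (fst t) (\<omega> (fst t))" if "t \<in> set cyc" for t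
  proof -
    have "(fst t, fst t) \<in> (stepL D (nbr V E l))\<^sup>+" using allcw that unfolding cw_def by blast
    from trancl_tpath[OF this] have "\<exists>xs. P (fst t) xs" unfolding P_def by blast
    then show ?thesis unfolding \<omega>_def by (rule someI_ex)
  qed
  have lnot: "l \<notin> nbr V E l"
  proof
    assume "l \<in> nbr V E l"
    then have "{l, l} \<in> E" unfolding nbr_def by simp
    then have "card {l, l} = 2" using fg unfolding finite_graph_def by blast
    then show False by simp
  qed
  define cyc' where "cyc' = concat (map (\<lambda>t. \<omega> (fst t) @ [t]) cyc)"
  have c': "tpath D q0 cyc' q0" unfolding cyc'_def
    by (rule concat_tpath[OF c]) (use \<omega>P in \<open>auto simp: P_def\<close>)
  have ne': "cyc' \<noteq> []" using ne unfolding cyc'_def by (cases cyc) auto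
  have sub: "set cyc \<subseteq> set cyc'" unfolding cyc'_def by auto
  have cols': "\<forall>x\<in>C. \<exists>t\<in>set cyc'. x \<in> col t" using cols sub by blast
  define f :: "'q \<times> 'v \<times> 'q \<Rightarrow> 'v" where "f = (\<lambda>t. fst (snd t))"
  have nd: "nodbl l (map f cyc') \<and> (cyc \<noteq> [] \<longrightarrow> hd (map f cyc') \<noteq> l)"
    unfolding cyc'_def
    by (rule concat_nodbl) (use \<omega>P lnot in \<open>auto simp: P_def f_def\<close>)
  have h0: "f (cyc' ! 0) \<noteq> l" using nd ne ne' by (simp add: hd_map[symmetric] hd_conv_nth)
  have lets': "\<forall>t\<in>set cyc'. f t \<in> closed_nbhd V E l"
  proof
    fix t assume "t \<in> set cyc'"
    then obtain t0 where t0: "t0 \<in> set cyc" "t \<in> set (\<omega> (fst t0) @ [t0])" unfolding cyc'_def by auto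
    then show "f t \<in> closed_nbhd V E l" using \<omega>P[OF t0(1)] lets unfolding P_def f_def closed_nbhd_def nbr_def by auto
  qed
  have "(\<lambda>n. f (cseq pre cyc' n)) \<in> gba_lang V qi D col C"
    using F1[OF Dsub p c' ne' cols'] unfolding f_def .
  then have "(\<lambda>n. f (cseq pre cyc' n)) \<in> lang_v V E l" using lang lV unfolding lang_G_def by blast
  moreover have "(\<lambda>n. f (cseq pre cyc' n)) \<notin> lang_v V E l"
  proof (rule not_in_lang_v[where m = "length pre"])
    show "\<forall>n\<ge>length pre. f (cseq pre cyc' n) \<in> closed_nbhd V E l"
      using lets' cseq_set[OF ne'] by blast
    show "\<forall>n\<ge>length pre. \<not> (f (cseq pre cyc' n) = l \<and> f (cseq pre cyc' (Suc n)) = l)"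
      using cseq_nodbl[OF ne' conjunct1[OF nd] h0] by blast
  qed
  ultimately show False by blast
qed



lemma map_upt_shift: "map w [a + c..<b + c] = map (\<lambda>i. w (i + c)) [a..<b]"
  by (rule nth_equalityI) (auto simp: add.commute add.left_commute)

lemma omega_periodic:
  assumes per: "\<forall>n. w (n + P) = w n" and P0: "0 < P" and e0: "0 < e"
    and b0: "map w [0..<e] \<in> K" and b1: "map w [e..<e+P] \<in> K"
  shows "w \<in> omega_power K"
proof -
  define p where "p = (\<lambda>n. case n of 0 \<Rightarrow> 0 | Suc k \<Rightarrow> e + k * P)"
  have perk: "w (i + k * P) = w i" for i k
  proof (induction k)
    case 0 then show ?case by simp
  next
    case (Suc k)
    have "w (i + Suc k * P) = w ((i + k * P) + P)" by (simp add: algebra_simps)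
    also have "\<dots> = w (i + k * P)" using per by blast
    finally show ?case using Suc by simp
  qed
  have sm: "strict_mono p" unfolding strict_mono_Suc_iff
  proof
    fix n show "p n < p (Suc n)" using P0 e0 unfolding p_def by (cases n) auto
  qed
  have blk: "map w [p n..<p (Suc n)] \<in> K" for n
  proof (cases n)
    case 0 then show ?thesis using b0 unfolding p_def by simp
  next
    case (Suc k)
    have "map w [p n..<p (Suc n)] = map w [e + k * P..<(e + P) + k * P]"
      unfolding p_def Suc by (simp add: algebra_simps)
    also have "\<dots> = map (\<lambda>i. w (i + k * P)) [e..<e + P]" by (rule map_upt_shift)
    also have "\<dots> = map w [e..<e + P]" using perk by simp
    finally show ?thesis using b1 by simp
  qed
  have "p 0 = 0" by (simp add: p_def)
  then show ?thesis unfolding omega_power_def using sm blk by blast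
qed

lemma sc_mem: "set u \<subseteq> V \<Longrightarrow> y \<in> Y \<Longrightarrow> u @ y \<in> star_concat V Y"
  unfolding star_concat_def by blast

lemma good_word:
  assumes V: "x \<in> V" "a \<in> V" "b \<in> V" and d: "x \<noteq> a" "x \<noteq> b" "a \<noteq> b"
    and e: "{x, a} \<in> E" "{x, b} \<in> E" "{a, b} \<in> E"
    and k4: "four_clique_free V E"
  shows "(\<lambda>n. [x, x, a, a, b, b] ! (n mod 6)) \<in> lang_G V E"
proof -
  define w where "w = (\<lambda>n. [x, x, a, a, b, b] ! (n mod 6))"
  have per: "\<forall>n. w (n + 6) = w n" unfolding w_def by simp
  have rng: "range w \<subseteq> V"
  proof
    fix y assume "y \<in> range w"
    then obtain n where n: "y = w n" by blast
    have "n mod 6 < length [x, x, a, a, b, b]" by simp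
    then have "[x, x, a, a, b, b] ! (n mod 6) \<in> set [x, x, a, a, b, b]" by (rule nth_mem)
    then show "y \<in> V" using V n unfolding w_def by auto
  qed
  have w0: "w 0 = x" "w 1 = x" "w 2 = a" "w 3 = a" "w 4 = b" "w 5 = b"
    "w 6 = x" "w 7 = x" "w 8 = a" "w 9 = a" "w 10 = b" "w 11 = b" unfolding w_def by simp_all
  have u1: "[0..<1] = [0]" "[0..<2] = [0,1]" "[0..<3] = [0,1,2]" "[0..<4] = [0,1,2,3]"
    "[0..<5] = [0,1,2,3,4]" "[0..<6] = [0,1,2,3,4,5]" by (simp_all add: upt_rec)
  have u2: "[1..<1+6] = [1,2,3,4,5,6]" "[2..<2+6] = [2,3,4,5,6,7]" "[3..<3+6] = [3,4,5,6,7,8]"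
    "[4..<4+6] = [4,5,6,7,8,9]" "[5..<5+6] = [5,6,7,8,9,10]" "[6..<6+6] = [6,7,8,9,10,11]"
    by (simp_all add: upt_rec)
  have inv: "w \<in> lang_v V E u" if u: "u \<in> V" for u
  proof -
    consider "u = x" | "u = a" | "u = b" | "u \<notin> {x, a, b}" by blast
    then show ?thesis
    proof cases
      case 1
      have A: "map w [0..<2] \<in> star_concat V {[u, u]}" using sc_mem[of "[]" V "[u,u]"] u1 w0 1 by simp
      have B: "map w [2..<2+6] \<in> star_concat V {[u, u]}"
        using sc_mem[of "[a,a,b,b]" V "[u,u]"] u2 w0 1 V by simp
      have "w \<in> omega_power (star_concat V {[u, u]})" by (rule omega_periodic[OF per _ _ A B]) simp_all
      then show ?thesis unfolding lang_v_def by blast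
    next
      case 2
      have A: "map w [0..<4] \<in> star_concat V {[u, u]}" using sc_mem[of "[x,x]" V "[u,u]"] u1 w0 2 V by simp
      have B: "map w [4..<4+6] \<in> star_concat V {[u, u]}"
        using sc_mem[of "[b,b,x,x]" V "[u,u]"] u2 w0 2 V by simp
      have "w \<in> omega_power (star_concat V {[u, u]})" by (rule omega_periodic[OF per _ _ A B]) simp_all
      then show ?thesis unfolding lang_v_def by blast
    next
      case 3
      have A: "map w [0..<6] \<in> star_concat V {[u, u]}" using sc_mem[of "[x,x,a,a]" V "[u,u]"] u1 w0 3 V by simp
      have B: "map w [6..<6+6] \<in> star_concat V {[u, u]}"
        using sc_mem[of "[x,x,a,a]" V "[u,u]"] u2 w0 3 V by simp
      have "w \<in> omega_power (star_concat V {[u, u]})" by (rule omega_periodic[OF per _ _ A B]) simp_all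
      then show ?thesis unfolding lang_v_def by blast
    next
      case 4
      define Y where "Y = {[y] |y. y \<in> V - closed_nbhd V E u}"
      have "\<not> (x \<in> closed_nbhd V E u \<and> a \<in> closed_nbhd V E u \<and> b \<in> closed_nbhd V E u)"
      proof
        assume h: "x \<in> closed_nbhd V E u \<and> a \<in> closed_nbhd V E u \<and> b \<in> closed_nbhd V E u"
        then have eu: "{u, x} \<in> E" "{u, a} \<in> E" "{u, b} \<in> E" using 4 unfolding closed_nbhd_def by auto
        have "is_k_clique V E 4 {u, x, a, b}"
          unfolding is_k_clique_def is_clique_def
          using 4 d V u e eu by (auto simp: insert_commute)
        then show False using k4 unfolding four_clique_free_def by blast
      qed
      then consider "x \<notin> closed_nbhd V E u" | "a \<notin> closed_nbhd V E u" | "b \<notin> closed_nbhd V E u" by blast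
      then have "w \<in> omega_power (star_concat V Y)"
      proof cases
        case 1
        have A: "map w [0..<1] \<in> star_concat V Y" using sc_mem[of "[]" V "[x]" Y] u1 w0 1 V unfolding Y_def by simp
        have B: "map w [1..<1+6] \<in> star_concat V Y"
          using sc_mem[of "[x,a,a,b,b]" V "[x]" Y] u2 w0 1 V unfolding Y_def by simp
        show ?thesis by (rule omega_periodic[OF per _ _ A B]) simp_all
      next
        case 2
        have A: "map w [0..<3] \<in> star_concat V Y" using sc_mem[of "[x,x]" V "[a]" Y] u1 w0 2 V unfolding Y_def by simp
        have B: "map w [3..<3+6] \<in> star_concat V Y"
          using sc_mem[of "[a,b,b,x,x]" V "[a]" Y] u2 w0 2 V unfolding Y_def by simp
        show ?thesis by (rule omega_periodic[OF per _ _ A B]) simp_all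
      next
        case 3
        have A: "map w [0..<5] \<in> star_concat V Y" using sc_mem[of "[x,x,a,a]" V "[b]" Y] u1 w0 3 V unfolding Y_def by simp
        have B: "map w [5..<5+6] \<in> star_concat V Y"
          using sc_mem[of "[b,x,x,a,a]" V "[b]" Y] u2 w0 3 V unfolding Y_def by simp
        show ?thesis by (rule omega_periodic[OF per _ _ A B]) simp_all
      qed
      then show ?thesis unfolding lang_v_def Y_def by blast
    qed
  qed
  show ?thesis unfolding lang_G_def using rng inv unfolding w_def by blast
qed



lemma tpath_set: "tpath D s xs s' \<Longrightarrow> set xs \<subseteq> D"
  by (induction xs arbitrary: s) auto

lemma stepL_sub: "D \<subseteq> Q \<times> V \<times> Q \<Longrightarrow> stepL D L \<subseteq> Q \<times> Q"
  unfolding stepL_def by auto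

lemma card3_split:
  assumes "card Q = 3" "q \<in> Q"
  obtains s t where "Q = {q, s, t}" "q \<noteq> s" "q \<noteq> t" "s \<noteq> t"
proof -
  have fin: "finite Q" using assms(1) by (metis card.infinite zero_neq_numeral)
  have "card (Q - {q}) = 2" using assms fin by simp
  then obtain s t where st: "Q - {q} = {s, t}" "s \<noteq> t" by (meson card_2_iff)
  then have "Q = {q, s, t}" using assms(2) by blast
  moreover have "q \<noteq> s" "q \<noteq> t" using st by blast+
  ultimately show ?thesis using that st(2) by blast
qed

lemma FL_cw:
  assumes Dsub: "D \<subseteq> Q \<times> V \<times> Q" and c3: "card Q = 3" and comp: "gba_complete Q V D"
    and V: "x \<in> V" "a \<in> V" "b \<in> V" and qQ: "q \<in> Q"
    and cyc: "cw D {x, a, b} q" and nab: "\<not> cw D {a, b} q" and nxb: "\<not> cw D {x, b} q"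
  shows "\<forall>u\<in>Q. cw D {x, a} u"
proof -
  obtain s t where Q: "Q = {q, s, t}" "q \<noteq> s" "q \<noteq> t" "s \<noteq> t" using card3_split[OF c3 qQ] by blast
  define X where "X = stepL D {x}"
  define A where "A = stepL D {a}"
  define B where "B = stepL D {b}"
  have e1: "stepL D {x, a, b} = X \<union> A \<union> B" unfolding X_def A_def B_def stepL_def by auto
  have e2: "stepL D {a, b} = A \<union> B" unfolding A_def B_def stepL_def by auto
  have e3: "stepL D {x, b} = X \<union> B" unfolding X_def B_def stepL_def by auto
  have e4: "stepL D {x, a} = X \<union> A" unfolding X_def A_def stepL_def by auto
  have sub: "X \<union> A \<union> B \<subseteq> {q,s,t} \<times> {q,s,t}" using stepL_sub[OF Dsub, of "{x,a,b}"] e1 Q(1) by simp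
  have cX: "\<forall>u\<in>{q,s,t}. \<exists>v. (u, v) \<in> X" using comp V Q(1) unfolding gba_complete_def X_def stepL_def by blast
  have cA: "\<forall>u\<in>{q,s,t}. \<exists>v. (u, v) \<in> A" using comp V Q(1) unfolding gba_complete_def A_def stepL_def by blast
  have cB: "\<forall>u\<in>{q,s,t}. \<exists>v. (u, v) \<in> B" using comp V Q(1) unfolding gba_complete_def B_def stepL_def by blast
  have "\<forall>u\<in>{q,s,t}. (u, u) \<in> (X \<union> A)\<^sup>+"
    by (rule FL_rel[OF sub Q(2-4) cX cA cB]) (use cyc nab nxb e1 e2 e3 in \<open>auto simp: cw_def\<close>)
  then show ?thesis using Q(1) e4 unfolding cw_def by simp
qed

lemma vertex_state:
  fixes D :: "('q \<times> 'v \<times> 'q) set" and V :: "'v set"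
  assumes fg: "finite_graph V E" and k4: "four_clique_free V E"
    and gba: "is_gba Q V qi D col C" and comp: "gba_complete Q V D" and c3: "card Q = 3"
    and lang: "gba_lang V qi D col C = lang_G V E"
    and V: "x \<in> V" "a \<in> V" "b \<in> V" and d: "x \<noteq> a" "x \<noteq> b" "a \<noteq> b"
    and e: "{x, a} \<in> E" "{x, b} \<in> E" "{a, b} \<in> E"
  shows "\<exists>q\<in>Q. cw D {x} q \<and> \<not> cw D (nbr V E x) q"
proof -
  have Dsub: "D \<subseteq> Q \<times> V \<times> Q" and finQ: "finite Q" and finC: "finite C"
    using gba unfolding is_gba_def by auto
  define w where "w = (\<lambda>n. [x, x, a, a, b, b] ! (n mod 6))"
  have "w \<in> lang_G V E" unfolding w_def by (rule good_word[OF V d e k4])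
  then have "w \<in> gba_lang V qi D col C" using lang by simp
  then obtain r where run: "is_run qi D w r" and acc: "gb_accepting col C w r" unfolding gba_lang_def by blast
  obtain pre cyc q0 where p: "tpath D qi pre q0" and c: "tpath D q0 cyc q0" and ne: "cyc \<noteq> []"
    and cols: "\<forall>x\<in>C. \<exists>t\<in>set cyc. x \<in> col t" and lets0: "\<forall>t\<in>set cyc. fst (snd t) \<in> range w"
    using F2[OF run acc finQ finC Dsub] by blast
  have rw: "range w \<subseteq> {x, a, b}"
  proof
    fix y assume "y \<in> range w"
    then obtain n where n: "y = w n" by blast
    have "n mod 6 < length [x, x, a, a, b, b]" by simp
    then have "[x, x, a, a, b, b] ! (n mod 6) \<in> set [x, x, a, a, b, b]" by (rule nth_mem)
    then show "y \<in> {x, a, b}" using n unfolding w_def by auto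
  qed
  have lets: "\<forall>t\<in>set cyc. fst (snd t) \<in> {x, a, b}" using lets0 rw by blast
  have nbx: "{x, a, b} \<subseteq> closed_nbhd V E x" using V e unfolding closed_nbhd_def by auto
  have nba: "{x, a, b} \<subseteq> closed_nbhd V E a" using V e unfolding closed_nbhd_def by (auto simp: insert_commute)
  have nbb: "{x, a, b} \<subseteq> closed_nbhd V E b" using V e unfolding closed_nbhd_def by (auto simp: insert_commute)
  obtain tx where tx: "tx \<in> set cyc" "\<not> cw D (nbr V E x) (fst tx)"
    using lemmaA[OF fg Dsub lang V(1) p c ne cols] lets nbx by blast
  obtain ta where ta: "ta \<in> set cyc" "\<not> cw D (nbr V E a) (fst ta)"
    using lemmaA[OF fg Dsub lang V(2) p c ne cols] lets nba by blast
  obtain tb where tb: "tb \<in> set cyc" "\<not> cw D (nbr V E b) (fst tb)"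
    using lemmaA[OF fg Dsub lang V(3) p c ne cols] lets nbb by blast
  define sx where "sx = fst tx"
  define sa where "sa = fst ta"
  define sb where "sb = fst tb"
  have inQ: "sx \<in> Q" "sa \<in> Q" "sb \<in> Q" using tx(1) ta(1) tb(1) tpath_set[OF c] Dsub
    unfolding sx_def sa_def sb_def by auto
  have cyx: "cw D {x, a, b} sx" unfolding sx_def using cw_on_cycle[OF c lets tx(1)] .
  have cya: "cw D {x, a, b} sa" unfolding sa_def using cw_on_cycle[OF c lets ta(1)] .
  have cyb: "cw D {x, a, b} sb" unfolding sb_def using cw_on_cycle[OF c lets tb(1)] .
  have nx: "\<not> cw D {a, b} sx"
  proof
    assume h: "cw D {a, b} sx"
    have s: "{a, b} \<subseteq> nbr V E x" using V e unfolding nbr_def by auto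
    from cw_mono[OF h s] tx(2) show False unfolding sx_def by simp
  qed
  have na: "\<not> cw D {x, b} sa"
  proof
    assume h: "cw D {x, b} sa"
    have s: "{x, b} \<subseteq> nbr V E a" using V e unfolding nbr_def by (auto simp: insert_commute)
    from cw_mono[OF h s] ta(2) show False unfolding sa_def by simp
  qed
  have nb: "\<not> cw D {x, a} sb"
  proof
    assume h: "cw D {x, a} sb"
    have s: "{x, a} \<subseteq> nbr V E b" using V e unfolding nbr_def by (auto simp: insert_commute)
    from cw_mono[OF h s] tb(2) show False unfolding sb_def by simp
  qed
  have dxa: "sx \<noteq> sa"
  proof
    assume h: "sx = sa"
    have "\<forall>u\<in>Q. cw D {x, a} u" using FL_cw[OF Dsub c3 comp V inQ(1) cyx nx] na h by simp
    then show False using nb inQ(3) by blast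
  qed
  have dxb: "sx \<noteq> sb"
  proof
    assume h: "sx = sb"
    have c1: "cw D {x, b, a} sx" using cyx by (simp add: insert_commute)
    have c2: "\<not> cw D {b, a} sx" using nx by (simp add: insert_commute)
    have c3': "\<not> cw D {x, a} sx" using nb h by simp
    have "\<forall>u\<in>Q. cw D {x, b} u" using FL_cw[OF Dsub c3 comp V(1) V(3) V(2) inQ(1) c1 c2 c3'] .
    then show False using na inQ(2) by blast
  qed
  have dab: "sa \<noteq> sb"
  proof
    assume h: "sa = sb"
    have c1: "cw D {a, b, x} sa" using cya by (simp add: insert_commute)
    have c2: "\<not> cw D {b, x} sa" using na by (simp add: insert_commute)
    have c3': "\<not> cw D {a, x} sa" using nb h by (simp add: insert_commute)
    have "\<forall>u\<in>Q. cw D {a, b} u" using FL_cw[OF Dsub c3 comp V(2) V(3) V(1) inQ(2) c1 c2 c3'] .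
    then show False using nx inQ(1) by blast
  qed
  have Qeq: "Q = {sx, sa, sb}"
  proof -
    have "{sx, sa, sb} \<subseteq> Q" using inQ by blast
    moreover have "card {sx, sa, sb} = card Q" using dxa dxb dab c3 by simp
    ultimately show ?thesis using card_subset_eq[OF finQ] by blast
  qed
  have "Q \<noteq> {}" using inQ by blast
  moreover have "\<forall>u\<in>Q. \<exists>v. (u, v) \<in> stepL D {x}" using comp V unfolding gba_complete_def stepL_def by blast
  ultimately obtain z where z: "z \<in> Q" "(z, z) \<in> (stepL D {x})\<^sup>+"
    using exists_cycle[OF finQ _ stepL_sub[OF Dsub]] by blast
  then have cz: "cw D {x} z" unfolding cw_def by simp
  have "z \<noteq> sa" using cz na cw_mono[of D "{x}" z "{x, b}"] by blast
  moreover have "z \<noteq> sb" using cz nb cw_mono[of D "{x}" z "{x, a}"] by blast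
  ultimately have "z = sx" using z(1) Qeq by blast
  then show ?thesis using cz tx(2) inQ(1) unfolding sx_def by blast
qed

lemma triangle_of:
  assumes tf: "triangle_full V E" and v: "v \<in> V"
  shows "\<exists>a b. a \<in> V \<and> b \<in> V \<and> v \<noteq> a \<and> v \<noteq> b \<and> a \<noteq> b \<and> {v, a} \<in> E \<and> {v, b} \<in> E \<and> {a, b} \<in> E"
proof -
  obtain K where K: "is_k_clique V E 3 K" "v \<in> K" using tf v unfolding triangle_full_def by blast
  then have c: "card K = 3" and sub: "K \<subseteq> V" and cl: "is_clique E K" unfolding is_k_clique_def by auto
  obtain a b where ab: "K = {v, a, b}" "v \<noteq> a" "v \<noteq> b" "a \<noteq> b" using card3_split[OF c K(2)] by blast
  have "{v, a} \<in> E" "{v, b} \<in> E" "{a, b} \<in> E" using cl ab unfolding is_clique_def by auto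
  then show ?thesis using ab sub by blast
qed

theorem lemma45:
  fixes V :: "'v set" and E :: "'v set set"
  assumes "finite_graph V E"
    and "triangle_full V E"
    and "four_clique_free V E"
    and "\<exists>(Q :: 'q set) qi \<Delta> (col :: 'q \<times> 'v \<times> 'q \<Rightarrow> 'c set) C.
           is_gba Q V qi \<Delta> col C \<and> gba_complete Q V \<Delta> \<and> card Q = 3 \<and>
           gba_lang V qi \<Delta> col C = lang_G V E"
  shows "three_colourable V E"
proof -
  obtain Q :: "'q set" and qi D and col :: "'q \<times> 'v \<times> 'q \<Rightarrow> 'c set" and C where
    gba: "is_gba Q V qi D col C" and comp: "gba_complete Q V D" and c3: "card Q = 3"
    and lang: "gba_lang V qi D col C = lang_G V E"
    using assms(4) by blast
  have finQ: "finite Q" using gba unfolding is_gba_def by auto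
  have ex: "\<exists>q\<in>Q. cw D {v} q \<and> \<not> cw D (nbr V E v) q" if v: "v \<in> V" for v
  proof -
    obtain a b where ab: "a \<in> V" "b \<in> V" "v \<noteq> a" "v \<noteq> b" "a \<noteq> b" "{v, a} \<in> E" "{v, b} \<in> E" "{a, b} \<in> E"
      using triangle_of[OF assms(2) v] by blast
    show ?thesis using vertex_state[OF assms(1) assms(3) gba comp c3 lang v ab(1,2) ab(3-5) ab(6-8)] .
  qed
  define cst where "cst = (\<lambda>v. SOME q. q \<in> Q \<and> cw D {v} q \<and> \<not> cw D (nbr V E v) q)"
  have cst: "cst v \<in> Q \<and> cw D {v} (cst v) \<and> \<not> cw D (nbr V E v) (cst v)" if "v \<in> V" for v
  proof -
    from ex[OF that] have "\<exists>q. q \<in> Q \<and> cw D {v} q \<and> \<not> cw D (nbr V E v) q" by blast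
    then show ?thesis unfolding cst_def by (rule someI_ex)
  qed
  obtain g where g: "bij_betw g Q {0..<card Q}" using ex_bij_betw_finite_nat[OF finQ] by blast
  define col3 where "col3 = (\<lambda>v. g (cst v) + 1)"
  have range3: "col3 v \<in> {1, 2, 3}" if "v \<in> V" for v
  proof -
    have "g (cst v) \<in> {0..<3}" using g cst[OF that] c3 unfolding bij_betw_def by auto
    then show ?thesis unfolding col3_def by auto
  qed
  have proper: "col3 v \<noteq> col3 v'" if "v \<in> V" "v' \<in> V" "{v, v'} \<in> E" for v v'
  proof
    assume eq: "col3 v = col3 v'"
    have "card {v, v'} = 2" using assms(1) that(3) unfolding finite_graph_def by blast
    then have "v \<noteq> v'" by auto
    have "v' \<in> nbr V E v" using that unfolding nbr_def by simp
    then have "cw D (nbr V E v) (cst v')" using cst[OF that(2)] cw_mono[of D "{v'}" "cst v'" "nbr V E v"] by blast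
    then have "cst v \<noteq> cst v'" using cst[OF that(1)] by auto
    moreover have "g (cst v) = g (cst v')" using eq unfolding col3_def by simp
    ultimately show False using g cst[OF that(1)] cst[OF that(2)] unfolding bij_betw_def inj_on_def by blast
  qed
  show ?thesis unfolding three_colourable_def using range3 proper by blast
qed


end
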